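(* Let $R$ be a ring with Jacobson radical $J$, and let $M$ be an RD-regular left $R$-module. Then $JM=0$; and if moreover $R$ is semilocal, then $M$ is semisimple.
   Context: A short exact sequence of left $R$-modules is RD-pure if it remains exact after tensoring with every right module of the form $R/rR$, $r\in R$; a submodule is an RD-submodule if the inclusion gives an RD-pure exact sequence. A left module is RD-regular if all of its submodules are RD-submodules. *)

theory Defs
  imports "HOL-Algebra.Module" "HOL-Algebra.QuotRing"
begin

text \<open>Left modules over a (not necessarily commutative) ring, using the
HOL-Algebra module record (the library locale module requires a commutative ring).\<close>

definition left_module :: "('a, 'c) ring_scheme \<Rightarrow> ('a, 'b, 'd) module_scheme \<Rightarrow> bool" where
  "left_module R M \<longleftrightarrow> ring R \<and> abelian_group M \<and>
     (\<forall>a\<in>carrier R. \<forall>x\<in>carrier M. a \<odot>\<^bsub>M\<^esub> x \<in> carrier M) \<and>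
     (\<forall>a\<in>carrier R. \<forall>b\<in>carrier R. \<forall>x\<in>carrier M.
        (a \<oplus>\<^bsub>R\<^esub> b) \<odot>\<^bsub>M\<^esub> x = (a \<odot>\<^bsub>M\<^esub> x) \<oplus>\<^bsub>M\<^esub> (b \<odot>\<^bsub>M\<^esub> x)) \<and>
     (\<forall>a\<in>carrier R. \<forall>x\<in>carrier M. \<forall>y\<in>carrier M.
        a \<odot>\<^bsub>M\<^esub> (x \<oplus>\<^bsub>M\<^esub> y) = (a \<odot>\<^bsub>M\<^esub> x) \<oplus>\<^bsub>M\<^esub> (a \<odot>\<^bsub>M\<^esub> y)) \<and>
     (\<forall>a\<in>carrier R. \<forall>b\<in>carrier R. \<forall>x\<in>carrier M.
        (a \<otimes>\<^bsub>R\<^esub> b) \<odot>\<^bsub>M\<^esub> x = a \<odot>\<^bsub>M\<^esub> (b \<odot>\<^bsub>M\<^esub> x)) \<and>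
     (\<forall>x\<in>carrier M. \<one>\<^bsub>R\<^esub> \<odot>\<^bsub>M\<^esub> x = x)"

definition lsubmodule :: "('a, 'c) ring_scheme \<Rightarrow> 'b set \<Rightarrow> ('a, 'b, 'd) module_scheme \<Rightarrow> bool" where
  "lsubmodule R N M \<longleftrightarrow> N \<subseteq> carrier M \<and> \<zero>\<^bsub>M\<^esub> \<in> N \<and>
     (\<forall>x\<in>N. \<forall>y\<in>N. x \<oplus>\<^bsub>M\<^esub> y \<in> N) \<and> (\<forall>x\<in>N. \<ominus>\<^bsub>M\<^esub> x \<in> N) \<and>
     (\<forall>a\<in>carrier R. \<forall>x\<in>N. a \<odot>\<^bsub>M\<^esub> x \<in> N)"

text \<open>RD-submodule: the sequence 0 \<rightarrow> N \<rightarrow> M \<rightarrow> M/N \<rightarrow> 0 stays exact after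
applying R/rR \<otimes>_R -. Via the natural isomorphism R/rR \<otimes>_R X \<cong> X/rX, this is
injectivity of the induced map N/rN \<rightarrow> M/rM (right exactness being automatic),
i.e. N \<inter> rM \<subseteq> rN for all r.\<close>

definition rd_submodule :: "('a, 'c) ring_scheme \<Rightarrow> 'b set \<Rightarrow> ('a, 'b, 'd) module_scheme \<Rightarrow> bool" where
  "rd_submodule R N M \<longleftrightarrow> lsubmodule R N M \<and>
     (\<forall>r\<in>carrier R. \<forall>x\<in>N. (\<exists>y\<in>carrier M. x = r \<odot>\<^bsub>M\<^esub> y) \<longrightarrow> (\<exists>z\<in>N. x = r \<odot>\<^bsub>M\<^esub> z))"

definition rd_regular :: "('a, 'c) ring_scheme \<Rightarrow> ('a, 'b, 'd) module_scheme \<Rightarrow> bool" where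
  "rd_regular R M \<longleftrightarrow> (\<forall>N. lsubmodule R N M \<longrightarrow> rd_submodule R N M)"

definition semisimple_module :: "('a, 'c) ring_scheme \<Rightarrow> ('a, 'b, 'd) module_scheme \<Rightarrow> bool" where
  "semisimple_module R M \<longleftrightarrow> (\<forall>N. lsubmodule R N M \<longrightarrow>
     (\<exists>N'. lsubmodule R N' M \<and> N \<inter> N' = {\<zero>\<^bsub>M\<^esub>} \<and>
        {x \<oplus>\<^bsub>M\<^esub> y | x y. x \<in> N \<and> y \<in> N'} = carrier M))"

definition left_ideal :: "('a, 'c) ring_scheme \<Rightarrow> 'a set \<Rightarrow> bool" where
  "left_ideal R L \<longleftrightarrow> L \<subseteq> carrier R \<and> \<zero>\<^bsub>R\<^esub> \<in> L \<and>
     (\<forall>x\<in>L. \<forall>y\<in>L. x \<oplus>\<^bsub>R\<^esub> y \<in> L) \<and> (\<forall>x\<in>L. \<ominus>\<^bsub>R\<^esub> x \<in> L) \<and>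
     (\<forall>a\<in>carrier R. \<forall>x\<in>L. a \<otimes>\<^bsub>R\<^esub> x \<in> L)"

definition maximal_left_ideal :: "('a, 'c) ring_scheme \<Rightarrow> 'a set \<Rightarrow> bool" where
  "maximal_left_ideal R L \<longleftrightarrow> left_ideal R L \<and> L \<noteq> carrier R \<and>
     (\<forall>L'. left_ideal R L' \<and> L \<subseteq> L' \<longrightarrow> L' = L \<or> L' = carrier R)"

definition jacobson_radical :: "('a, 'c) ring_scheme \<Rightarrow> 'a set" where
  "jacobson_radical R = carrier R \<inter> \<Inter>{L. maximal_left_ideal R L}"

definition semisimple_ring :: "('a, 'c) ring_scheme \<Rightarrow> bool" where
  "semisimple_ring R \<longleftrightarrow> (\<forall>L. left_ideal R L \<longrightarrow>
     (\<exists>L'. left_ideal R L' \<and> L \<inter> L' = {\<zero>\<^bsub>R\<^esub>} \<and>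
        {x \<oplus>\<^bsub>R\<^esub> y | x y. x \<in> L \<and> y \<in> L'} = carrier R))"

definition semilocal :: "('a, 'c) ring_scheme \<Rightarrow> bool" where
  "semilocal R \<longleftrightarrow> semisimple_ring (R Quot jacobson_radical R)"

end

theory Submission
  imports Defs
begin


context ring begin

lemma li_one_all: "left_ideal R L \<Longrightarrow> \<one> \<in> L \<Longrightarrow> L = carrier R"
  unfolding left_ideal_def by (metis r_one subsetI subset_antisym)

lemma max_exists:
  assumes I: "left_ideal R I" and one: "\<one> \<notin> I"
  shows "\<exists>L. maximal_left_ideal R L \<and> I \<subseteq> L"
proof -
  let ?A = "{L. left_ideal R L \<and> I \<subseteq> L \<and> \<one> \<notin> L}"
  have "\<exists>M\<in>?A. \<forall>X\<in>?A. M \<subseteq> X \<longrightarrow> X = M"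
  proof (rule subset_Zorn_nonempty)
    show "?A \<noteq> {}" using I one by blast
  next
    fix C assume C: "C \<noteq> {}" "subset.chain ?A C"
    have CA: "C \<subseteq> ?A" and ch: "\<And>X Y. X \<in> C \<Longrightarrow> Y \<in> C \<Longrightarrow> X \<subseteq> Y \<or> Y \<subseteq> X"
      using C(2) unfolding subset.chain_def by auto
    have "left_ideal R (\<Union>C)"
      unfolding left_ideal_def
    proof (intro conjI ballI)
      show "\<Union>C \<subseteq> carrier R" using CA unfolding left_ideal_def by blast
      show "\<zero> \<in> \<Union>C" using CA C(1) unfolding left_ideal_def by blast
      fix x assume "x \<in> \<Union>C"
      then obtain X where X: "X \<in> C" "x \<in> X" by blast
      then have LX: "left_ideal R X" using CA by blast
      show "\<ominus> x \<in> \<Union>C" using X LX unfolding left_ideal_def by blast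
      { fix a assume "a \<in> carrier R"
        then show "a \<otimes> x \<in> \<Union>C" using X LX unfolding left_ideal_def by blast }
      { fix y assume "y \<in> \<Union>C"
        then obtain Y where Y: "Y \<in> C" "y \<in> Y" by blast
        then have LY: "left_ideal R Y" using CA by blast
        show "x \<oplus> y \<in> \<Union>C"
        proof (cases "X \<subseteq> Y")
          case True then show ?thesis using X Y LY unfolding left_ideal_def by blast
        next
          case False then have "Y \<subseteq> X" using ch X Y by blast
          then show ?thesis using X Y LX unfolding left_ideal_def by blast
        qed }
    qed
    then show "\<Union>C \<in> ?A" using CA C(1) by blast
  qed
  then obtain L where L: "L \<in> ?A" and mx: "\<forall>X\<in>?A. L \<subseteq> X \<longrightarrow> X = L" by blast
  have "maximal_left_ideal R L"
    unfolding maximal_left_ideal_def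
  proof (intro conjI allI impI)
    show "left_ideal R L" using L by blast
    show "L \<noteq> carrier R" using L by auto
    fix L' assume "left_ideal R L' \<and> L \<subseteq> L'"
    then show "L' = L \<or> L' = carrier R"
      using mx L li_one_all by blast
  qed
  then show ?thesis using L by blast
qed

lemma maxli_not_one: "maximal_left_ideal R L \<Longrightarrow> \<one> \<notin> L"
  unfolding maximal_left_ideal_def using li_one_all by blast

lemma jac_left_inv:
  assumes y: "y \<in> jacobson_radical R" and r: "r \<in> carrier R"
  shows "\<exists>u\<in>carrier R. u \<otimes> (\<one> \<ominus> r \<otimes> y) = \<one>"
proof (rule ccontr)
  assume nu: "\<not> ?thesis"
  have yc: "y \<in> carrier R" using y unfolding jacobson_radical_def by blast
  let ?e = "\<one> \<ominus> r \<otimes> y"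
  have ec: "?e \<in> carrier R" using yc r by simp
  let ?I = "{a \<otimes> ?e | a. a \<in> carrier R}"
  have I: "left_ideal R ?I"
    unfolding left_ideal_def
  proof (intro conjI ballI)
    show "?I \<subseteq> carrier R" using ec by auto
    show "\<zero> \<in> ?I" using ec by (auto intro!: exI[of _ \<zero>])
    fix x assume "x \<in> ?I"
    then obtain a where a: "a \<in> carrier R" "x = a \<otimes> ?e" by blast
    show "\<ominus> x \<in> ?I" using a ec by (auto intro!: exI[of _ "\<ominus> a"] simp: l_minus)
    { fix b assume "b \<in> carrier R"
      then show "b \<otimes> x \<in> ?I" using a ec by (auto intro!: exI[of _ "b \<otimes> a"] simp: m_assoc) }
    { fix z assume "z \<in> ?I"
      then obtain b where b: "b \<in> carrier R" "z = b \<otimes> ?e" by blast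
      show "x \<oplus> z \<in> ?I" using a b ec by (auto intro!: exI[of _ "a \<oplus> b"] simp: l_distr) }
  qed
  have "\<one> \<notin> ?I" using nu by auto
  then obtain L where L: "maximal_left_ideal R L" "?I \<subseteq> L" using max_exists I by blast
  have LI: "left_ideal R L" using L unfolding maximal_left_ideal_def by blast
  have "y \<in> L" using y L unfolding jacobson_radical_def by blast
  then have "r \<otimes> y \<in> L" using LI r unfolding left_ideal_def by blast
  moreover have "?e \<in> L" using L(2) ec by (auto intro!: exI[of _ \<one>])
  ultimately have "?e \<oplus> r \<otimes> y \<in> L" using LI unfolding left_ideal_def by blast
  moreover have "?e \<oplus> r \<otimes> y = \<one>" using r yc by (simp add: a_minus_def a_assoc l_neg)
  ultimately show False using maxli_not_one L by auto
qed

lemma jac_intro: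
  assumes yc: "y \<in> carrier R" and h: "\<And>r. r \<in> carrier R \<Longrightarrow> \<exists>u\<in>carrier R. u \<otimes> (\<one> \<ominus> r \<otimes> y) = \<one>"
  shows "y \<in> jacobson_radical R"
  unfolding jacobson_radical_def
proof (intro IntI yc InterI)
  fix L assume "L \<in> {L. maximal_left_ideal R L}"
  then have L: "maximal_left_ideal R L" by blast
  have LI: "left_ideal R L" using L unfolding maximal_left_ideal_def by blast
  show "y \<in> L"
  proof (rule ccontr)
    assume ny: "y \<notin> L"
    let ?L' = "{l \<oplus> r \<otimes> y | l r. l \<in> L \<and> r \<in> carrier R}"
    have LI': "left_ideal R ?L'"
      unfolding left_ideal_def
    proof (intro conjI ballI)
      show "?L' \<subseteq> carrier R" using LI yc unfolding left_ideal_def by auto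
      show "\<zero> \<in> ?L'" using LI yc unfolding left_ideal_def by (auto intro!: exI[of _ \<zero>])
      fix x assume "x \<in> ?L'"
      then obtain l r where a: "l \<in> L" "r \<in> carrier R" "x = l \<oplus> r \<otimes> y" by blast
      have lc: "l \<in> carrier R" using a LI unfolding left_ideal_def by blast
      have "\<ominus> x = (\<ominus> l) \<oplus> (\<ominus> r) \<otimes> y" using a lc yc by (simp add: l_minus minus_add)
      moreover have "\<ominus> l \<in> L" using a LI unfolding left_ideal_def by blast
      ultimately show "\<ominus> x \<in> ?L'" using a by blast
      { fix b assume b: "b \<in> carrier R"
        have "b \<otimes> x = (b \<otimes> l) \<oplus> (b \<otimes> r) \<otimes> y" using a b lc yc by (simp add: m_assoc r_distr)
        moreover have "b \<otimes> l \<in> L" using a b LI unfolding left_ideal_def by blast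
        ultimately show "b \<otimes> x \<in> ?L'" using a b by blast }
      { fix z assume "z \<in> ?L'"
        then obtain l' r' where b: "l' \<in> L" "r' \<in> carrier R" "z = l' \<oplus> r' \<otimes> y" by blast
        have lc': "l' \<in> carrier R" using b LI unfolding left_ideal_def by blast
        have "x \<oplus> z = (l \<oplus> l') \<oplus> (r \<oplus> r') \<otimes> y" using a b lc lc' yc by (simp add: l_distr a_ac)
        moreover have "l \<oplus> l' \<in> L" using a b LI unfolding left_ideal_def by blast
        ultimately show "x \<oplus> z \<in> ?L'" using a b by blast }
    qed
    have sub: "L \<subseteq> ?L'"
    proof
      fix l assume l: "l \<in> L"
      then have "l \<in> carrier R" using LI unfolding left_ideal_def by blast
      then have "l = l \<oplus> \<zero> \<otimes> y" using yc by simp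
      then show "l \<in> ?L'" using l by blast
    qed
    have "y = \<zero> \<oplus> \<one> \<otimes> y" using yc by simp
    moreover have "\<zero> \<in> L" using LI unfolding left_ideal_def by blast
    ultimately have "y \<in> ?L'" by blast
    then have "?L' = carrier R" using L LI' sub ny unfolding maximal_left_ideal_def by blast
    then have "\<one> \<in> ?L'" by simp
    then obtain l r where a: "l \<in> L" "r \<in> carrier R" "\<one> = l \<oplus> r \<otimes> y" by blast
    have lc: "l \<in> carrier R" using a LI unfolding left_ideal_def by blast
    have "l = \<one> \<ominus> r \<otimes> y" using a lc yc by (simp add: a_minus_def a_assoc r_neg)
    obtain u where u: "u \<in> carrier R" "u \<otimes> (\<one> \<ominus> r \<otimes> y) = \<one>" using h a(2) by blast
    have "\<one> \<in> L" using u a(1) LI \<open>l = _\<close> unfolding left_ideal_def by metis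
    then show False using maxli_not_one L by blast
  qed
qed

lemma trick:
  assumes u: "u \<in> carrier R" and b: "b \<in> carrier R" and c: "c \<in> carrier R"
    and h: "u \<otimes> (\<one> \<ominus> b \<otimes> c) = \<one>"
  shows "(\<one> \<oplus> c \<otimes> u \<otimes> b) \<otimes> (\<one> \<ominus> c \<otimes> b) = \<one>"
proof -
  have e1: "c \<otimes> u \<otimes> b \<otimes> (\<one> \<ominus> c \<otimes> b) = c \<otimes> (u \<otimes> (\<one> \<ominus> b \<otimes> c)) \<otimes> b"
    using u b c by (simp add: a_minus_def r_distr l_distr r_minus l_minus m_assoc)
  have "(\<one> \<oplus> c \<otimes> u \<otimes> b) \<otimes> (\<one> \<ominus> c \<otimes> b) = (\<one> \<ominus> c \<otimes> b) \<oplus> c \<otimes> u \<otimes> b \<otimes> (\<one> \<ominus> c \<otimes> b)"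
    using u b c by (simp add: l_distr)
  also have "\<dots> = (\<one> \<ominus> c \<otimes> b) \<oplus> c \<otimes> b" using e1 h b c by simp
  also have "\<dots> = \<one>" using b c by (simp add: a_minus_def a_assoc l_neg)
  finally show ?thesis .
qed

lemma jac_carrier: "jacobson_radical R \<subseteq> carrier R"
  unfolding jacobson_radical_def by blast

lemma jac_ideal: "ideal (jacobson_radical R) R"
proof (rule idealI[OF ring_axioms])
  let ?J = "jacobson_radical R"
  have mem: "\<And>j L. j \<in> ?J \<Longrightarrow> maximal_left_ideal R L \<Longrightarrow> j \<in> L"
    unfolding jacobson_radical_def by blast
  have memI: "\<And>j. j \<in> carrier R \<Longrightarrow> (\<And>L. maximal_left_ideal R L \<Longrightarrow> j \<in> L) \<Longrightarrow> j \<in> ?J"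
    unfolding jacobson_radical_def by blast
  have li: "\<And>L. maximal_left_ideal R L \<Longrightarrow> left_ideal R L" unfolding maximal_left_ideal_def by blast
  show "subgroup ?J (add_monoid R)"
  proof (rule group.subgroupI[OF a_group])
    show "?J \<subseteq> carrier (add_monoid R)" using jac_carrier by simp
    have "\<zero> \<in> ?J" by (rule memI) (auto dest!: li simp: left_ideal_def)
    then show "?J \<noteq> {}" by blast
    fix a assume a: "a \<in> ?J"
    show "inv\<^bsub>add_monoid R\<^esub> a \<in> ?J"
      unfolding a_inv_def[symmetric]
    proof (rule memI)
      show "\<ominus> a \<in> carrier R" using a jac_carrier by blast
      fix L assume L: "maximal_left_ideal R L"
      then have "a \<in> L" using mem a by blast
      then show "\<ominus> a \<in> L" using li[OF L] unfolding left_ideal_def by blast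
    qed
    fix b assume b: "b \<in> ?J"
    show "a \<otimes>\<^bsub>add_monoid R\<^esub> b \<in> ?J"
      unfolding monoid_record_simps
    proof (rule memI)
      show "a \<oplus> b \<in> carrier R" using a b jac_carrier by blast
      fix L assume L: "maximal_left_ideal R L"
      then have "a \<in> L" "b \<in> L" using mem a b by blast+
      then show "a \<oplus> b \<in> L" using li[OF L] unfolding left_ideal_def by blast
    qed
  qed
  show "x \<otimes> a \<in> ?J" if a: "a \<in> ?J" and x: "x \<in> carrier R" for a x
    proof (rule memI)
      show "x \<otimes> a \<in> carrier R" using a x jac_carrier by blast
      fix L assume L: "maximal_left_ideal R L"
      then have "a \<in> L" using mem a by blast
      then show "x \<otimes> a \<in> L" using li[OF L] x unfolding left_ideal_def by blast
    qed
  fix a x assume a: "a \<in> ?J" and x: "x \<in> carrier R"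
  have ac: "a \<in> carrier R" using a jac_carrier by blast
  show "a \<otimes> x \<in> ?J"
  proof (rule jac_intro)
    show "a \<otimes> x \<in> carrier R" using ac x by simp
    fix r assume r: "r \<in> carrier R"
    obtain u where u: "u \<in> carrier R" "u \<otimes> (\<one> \<ominus> (x \<otimes> r) \<otimes> a) = \<one>"
      using jac_left_inv[OF a, of "x \<otimes> r"] r x by blast
    have "(\<one> \<oplus> (r \<otimes> a) \<otimes> u \<otimes> x) \<otimes> (\<one> \<ominus> (r \<otimes> a) \<otimes> x) = \<one>"
      by (rule trick) (use u r x ac in \<open>simp_all add: m_assoc\<close>)
    then show "\<exists>u\<in>carrier R. u \<otimes> (\<one> \<ominus> r \<otimes> (a \<otimes> x)) = \<one>"
      using u r x ac by (auto simp: m_assoc intro!: bexI[of _ "\<one> \<oplus> (r \<otimes> a) \<otimes> u \<otimes> x"])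
  qed
qed

lemma semilocal_split:
  assumes sl: "semilocal R" and L: "left_ideal R L"
  shows "\<exists>l\<in>L. \<exists>l2\<in>carrier R. \<one> \<ominus> (l \<oplus> l2) \<in> jacobson_radical R \<and>
           (\<forall>r\<in>carrier R. r \<otimes> l2 \<in> L \<longrightarrow> r \<otimes> l2 \<in> jacobson_radical R)"
proof -
  define J where "J = jacobson_radical R"
  interpret I: ideal J R unfolding J_def by (rule jac_ideal)
  define Q where "Q = R Quot J"
  define h where "h = (\<lambda>a. J +> a)"
  interpret H: ring_hom_ring R Q h unfolding Q_def h_def by (rule I.rcos_ring_hom_ring)
  have Qc: "\<And>x. x \<in> carrier Q \<Longrightarrow> \<exists>a\<in>carrier R. x = h a"
    unfolding Q_def h_def FactRing_def A_RCOSETS_def' by auto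
  have Q0: "\<zero>\<^bsub>Q\<^esub> = J" unfolding Q_def FactRing_def by simp
  have ker: "\<And>c. c \<in> carrier R \<Longrightarrow> h c = J \<Longrightarrow> c \<in> J"
    unfolding h_def using I.a_rcos_self by metis
  have Lc: "L \<subseteq> carrier R" using L unfolding left_ideal_def by blast
  have LQ: "left_ideal Q (h ` L)"
    unfolding left_ideal_def
  proof (intro conjI ballI)
    show "h ` L \<subseteq> carrier Q" using Lc by auto
    show "\<zero>\<^bsub>Q\<^esub> \<in> h ` L" using L H.hom_zero unfolding left_ideal_def by (metis image_eqI)
    fix x assume "x \<in> h ` L"
    then obtain l where l: "l \<in> L" "x = h l" by blast
    have lc: "l \<in> carrier R" using l Lc by blast
    have "\<ominus> l \<in> L" using l L unfolding left_ideal_def by blast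
    then show "\<ominus>\<^bsub>Q\<^esub> x \<in> h ` L" using l lc by (metis H.hom_a_inv image_eqI)
    { fix y assume "y \<in> h ` L"
      then obtain l' where l': "l' \<in> L" "y = h l'" by blast
      have "l \<oplus> l' \<in> L" using l l' L unfolding left_ideal_def by blast
      then show "x \<oplus>\<^bsub>Q\<^esub> y \<in> h ` L" using l l' lc Lc by (metis H.hom_add image_eqI subsetD) }
    { fix a assume "a \<in> carrier Q"
      then obtain b where b: "b \<in> carrier R" "a = h b" using Qc by blast
      have "b \<otimes> l \<in> L" using l b L unfolding left_ideal_def by blast
      then show "a \<otimes>\<^bsub>Q\<^esub> x \<in> h ` L" using l b lc by (metis H.hom_mult image_eqI) }
  qed
  have "semisimple_ring Q" using sl unfolding semilocal_def Q_def J_def .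
  then have "left_ideal Q (h ` L) \<longrightarrow> (\<exists>L'. left_ideal Q L' \<and> h ` L \<inter> L' = {\<zero>\<^bsub>Q\<^esub>} \<and>
        {x \<oplus>\<^bsub>Q\<^esub> y | x y. x \<in> h ` L \<and> y \<in> L'} = carrier Q)"
    unfolding semisimple_ring_def by (rule spec)
  then have "\<exists>L'. left_ideal Q L' \<and> h ` L \<inter> L' = {\<zero>\<^bsub>Q\<^esub>} \<and>
        {x \<oplus>\<^bsub>Q\<^esub> y | x y. x \<in> h ` L \<and> y \<in> L'} = carrier Q" using LQ by (rule mp)
  then obtain L' where L'all: "left_ideal Q L' \<and> h ` L \<inter> L' = {\<zero>\<^bsub>Q\<^esub>} \<and>
        {x \<oplus>\<^bsub>Q\<^esub> y | x y. x \<in> h ` L \<and> y \<in> L'} = carrier Q" by (rule exE)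
  have L'1: "left_ideal Q L'" using L'all by (rule conjunct1)
  have L'2: "h ` L \<inter> L' = {\<zero>\<^bsub>Q\<^esub>}" using L'all by (simp only:)
  have L'3: "{x \<oplus>\<^bsub>Q\<^esub> y | x y. x \<in> h ` L \<and> y \<in> L'} = carrier Q" using L'all by (simp only:)
  have "h \<one> \<in> carrier Q" by simp
  then have "h \<one> \<in> {x \<oplus>\<^bsub>Q\<^esub> y | x y. x \<in> h ` L \<and> y \<in> L'}" by (simp only: L'3)
  then have "\<exists>x y. h \<one> = x \<oplus>\<^bsub>Q\<^esub> y \<and> x \<in> h ` L \<and> y \<in> L'" by (simp only: mem_Collect_eq)
  then obtain x y where xy: "x \<in> h ` L" "y \<in> L'" "h \<one> = x \<oplus>\<^bsub>Q\<^esub> y" by blast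
  obtain l where l: "l \<in> L" "x = h l" using xy by blast
  have lc: "l \<in> carrier R" using l Lc by blast
  have "y \<in> carrier Q" using xy L'1 unfolding left_ideal_def by blast
  then obtain l2 where l2: "l2 \<in> carrier R" "y = h l2" using Qc by blast
  have h1: "h \<one> = h (l \<oplus> l2)" using xy l l2 lc by simp
  have "h (\<one> \<ominus> (l \<oplus> l2)) = h \<one> \<oplus>\<^bsub>Q\<^esub> (\<ominus>\<^bsub>Q\<^esub> h (l \<oplus> l2))"
    using lc l2 by (simp add: a_minus_def)
  also have "\<dots> = \<zero>\<^bsub>Q\<^esub>" unfolding h1 using lc l2 by (simp add: H.S.r_neg)
  finally have "\<one> \<ominus> (l \<oplus> l2) \<in> J" using ker lc l2 Q0 by simp
  moreover have "r \<otimes> l2 \<in> J" if r: "r \<in> carrier R" and rl: "r \<otimes> l2 \<in> L" for r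
  proof -
    have "h (r \<otimes> l2) = h r \<otimes>\<^bsub>Q\<^esub> y" using r l2 by simp
    also have "\<dots> \<in> L'" using L'1 xy r unfolding left_ideal_def by simp
    finally have "h (r \<otimes> l2) \<in> h ` L \<inter> L'" using rl by blast
    then show ?thesis using L'2 Q0 ker r l2 by simp
  qed
  ultimately show ?thesis using l l2 unfolding J_def by blast
qed

end


locale lmod =
  fixes R :: "('a, 'c) ring_scheme" (structure) and M :: "('a, 'b, 'd) module_scheme"
  assumes lm: "left_module R M"
begin

sublocale R: ring R using lm unfolding left_module_def by blast
sublocale M: abelian_group M using lm unfolding left_module_def by blast

lemma smc[simp]: "a \<in> carrier R \<Longrightarrow> x \<in> carrier M \<Longrightarrow> a \<odot>\<^bsub>M\<^esub> x \<in> carrier M"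
  using lm unfolding left_module_def by blast
lemma sd1: "a \<in> carrier R \<Longrightarrow> b \<in> carrier R \<Longrightarrow> x \<in> carrier M \<Longrightarrow>
   (a \<oplus> b) \<odot>\<^bsub>M\<^esub> x = (a \<odot>\<^bsub>M\<^esub> x) \<oplus>\<^bsub>M\<^esub> (b \<odot>\<^bsub>M\<^esub> x)"
  using lm unfolding left_module_def by blast
lemma sd2: "a \<in> carrier R \<Longrightarrow> x \<in> carrier M \<Longrightarrow> y \<in> carrier M \<Longrightarrow>
   a \<odot>\<^bsub>M\<^esub> (x \<oplus>\<^bsub>M\<^esub> y) = (a \<odot>\<^bsub>M\<^esub> x) \<oplus>\<^bsub>M\<^esub> (a \<odot>\<^bsub>M\<^esub> y)"
  using lm unfolding left_module_def by blast
lemma sassoc: "a \<in> carrier R \<Longrightarrow> b \<in> carrier R \<Longrightarrow> x \<in> carrier M \<Longrightarrow>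
   (a \<otimes> b) \<odot>\<^bsub>M\<^esub> x = a \<odot>\<^bsub>M\<^esub> (b \<odot>\<^bsub>M\<^esub> x)"
  using lm unfolding left_module_def by blast
lemma sone[simp]: "x \<in> carrier M \<Longrightarrow> \<one> \<odot>\<^bsub>M\<^esub> x = x"
  using lm unfolding left_module_def by blast

lemma idem_zero: "x \<in> carrier M \<Longrightarrow> x = x \<oplus>\<^bsub>M\<^esub> x \<Longrightarrow> x = \<zero>\<^bsub>M\<^esub>"
  by (metis M.l_neg M.a_assoc M.a_inv_closed M.l_zero)

lemma s0r[simp]: "a \<in> carrier R \<Longrightarrow> a \<odot>\<^bsub>M\<^esub> \<zero>\<^bsub>M\<^esub> = \<zero>\<^bsub>M\<^esub>"
  by (rule idem_zero) (simp_all flip: sd2)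

lemma s0l[simp]: "x \<in> carrier M \<Longrightarrow> \<zero> \<odot>\<^bsub>M\<^esub> x = \<zero>\<^bsub>M\<^esub>"
  by (rule idem_zero) (simp_all flip: sd1)

lemma sneg: "a \<in> carrier R \<Longrightarrow> x \<in> carrier M \<Longrightarrow> (\<ominus> a) \<odot>\<^bsub>M\<^esub> x = \<ominus>\<^bsub>M\<^esub> (a \<odot>\<^bsub>M\<^esub> x)"
  by (rule M.minus_equality[symmetric]) (simp_all flip: sd1 add: R.l_neg)

lemma sminus: "a \<in> carrier R \<Longrightarrow> b \<in> carrier R \<Longrightarrow> x \<in> carrier M \<Longrightarrow>
   (a \<ominus> b) \<odot>\<^bsub>M\<^esub> x = (a \<odot>\<^bsub>M\<^esub> x) \<ominus>\<^bsub>M\<^esub> (b \<odot>\<^bsub>M\<^esub> x)"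
  by (simp add: a_minus_def sd1 sneg)

lemma part1:
  assumes rd: "rd_regular R M" and j: "j \<in> jacobson_radical R" and x: "x \<in> carrier M"
  shows "j \<odot>\<^bsub>M\<^esub> x = \<zero>\<^bsub>M\<^esub>"
proof -
  have jc: "j \<in> carrier R" using j R.jac_carrier by blast
  let ?v = "j \<odot>\<^bsub>M\<^esub> x"
  have vc: "?v \<in> carrier M" using jc x by simp
  let ?N = "{a \<odot>\<^bsub>M\<^esub> ?v | a. a \<in> carrier R}"
  have N: "lsubmodule R ?N M"
    unfolding lsubmodule_def
  proof (intro conjI ballI)
    show "?N \<subseteq> carrier M" using vc by auto
    have "\<zero>\<^bsub>M\<^esub> = \<zero> \<odot>\<^bsub>M\<^esub> ?v" using vc by simp
    then show "\<zero>\<^bsub>M\<^esub> \<in> ?N" by blast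
    fix y assume "y \<in> ?N"
    then obtain a where a: "a \<in> carrier R" "y = a \<odot>\<^bsub>M\<^esub> ?v" by blast
    have "\<ominus>\<^bsub>M\<^esub> y = (\<ominus> a) \<odot>\<^bsub>M\<^esub> ?v" using a vc by (simp add: sneg)
    then show "\<ominus>\<^bsub>M\<^esub> y \<in> ?N" using a by blast
    { fix b assume b: "b \<in> carrier R"
      have "b \<odot>\<^bsub>M\<^esub> y = (b \<otimes> a) \<odot>\<^bsub>M\<^esub> ?v" using a b vc by (simp add: sassoc)
      then show "b \<odot>\<^bsub>M\<^esub> y \<in> ?N" using a b by blast }
    { fix z assume "z \<in> ?N"
      then obtain b where b: "b \<in> carrier R" "z = b \<odot>\<^bsub>M\<^esub> ?v" by blast
      have "y \<oplus>\<^bsub>M\<^esub> z = (a \<oplus> b) \<odot>\<^bsub>M\<^esub> ?v" using a b vc by (simp add: sd1)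
      then show "y \<oplus>\<^bsub>M\<^esub> z \<in> ?N" using a b by blast }
  qed
  have vN: "?v \<in> ?N" using vc by (force intro: exI[of _ \<one>])
  have "rd_submodule R ?N M" using rd N unfolding rd_regular_def by blast
  then have "\<exists>z\<in>?N. ?v = j \<odot>\<^bsub>M\<^esub> z" using vN jc x unfolding rd_submodule_def by blast
  then obtain a where a: "a \<in> carrier R" "?v = j \<odot>\<^bsub>M\<^esub> (a \<odot>\<^bsub>M\<^esub> ?v)" by blast
  define w where "w = a \<odot>\<^bsub>M\<^esub> ?v"
  have wc: "w \<in> carrier M" using a vc unfolding w_def by simp
  have "(a \<otimes> j) \<odot>\<^bsub>M\<^esub> w = a \<odot>\<^bsub>M\<^esub> (j \<odot>\<^bsub>M\<^esub> w)" using a jc wc by (simp add: sassoc)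
  also have "\<dots> = w" using a(2) unfolding w_def by simp
  finally have ajw: "(a \<otimes> j) \<odot>\<^bsub>M\<^esub> w = w" .
  obtain u where u: "u \<in> carrier R" "u \<otimes> (\<one> \<ominus> a \<otimes> j) = \<one>"
    using R.jac_left_inv[OF j a(1)] by blast
  have "(\<one> \<ominus> a \<otimes> j) \<odot>\<^bsub>M\<^esub> w = \<zero>\<^bsub>M\<^esub>"
  proof -
    have "(\<one> \<ominus> a \<otimes> j) \<odot>\<^bsub>M\<^esub> w = w \<ominus>\<^bsub>M\<^esub> ((a \<otimes> j) \<odot>\<^bsub>M\<^esub> w)"
      using a jc wc by (subst sminus) simp_all
    also have "\<dots> = \<zero>\<^bsub>M\<^esub>" unfolding ajw using wc by (simp add: a_minus_def M.r_neg)
    finally show ?thesis .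
  qed
  then have "u \<odot>\<^bsub>M\<^esub> ((\<one> \<ominus> a \<otimes> j) \<odot>\<^bsub>M\<^esub> w) = \<zero>\<^bsub>M\<^esub>" using u by simp
  moreover have "(u \<otimes> (\<one> \<ominus> a \<otimes> j)) \<odot>\<^bsub>M\<^esub> w = u \<odot>\<^bsub>M\<^esub> ((\<one> \<ominus> a \<otimes> j) \<odot>\<^bsub>M\<^esub> w)"
    using u a jc wc by (intro sassoc) simp_all
  ultimately have "\<one> \<odot>\<^bsub>M\<^esub> w = \<zero>\<^bsub>M\<^esub>" using u by simp
  then have "w = \<zero>\<^bsub>M\<^esub>" using wc by simp
  then show ?thesis using a(2) jc unfolding w_def by simp
qed


lemma sub_carrier: "lsubmodule R A M \<Longrightarrow> A \<subseteq> carrier M"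
  unfolding lsubmodule_def by blast

lemma sum_sub:
  assumes A: "lsubmodule R A M" and B: "lsubmodule R B M"
  shows "lsubmodule R {a \<oplus>\<^bsub>M\<^esub> b | a b. a \<in> A \<and> b \<in> B} M"
  unfolding lsubmodule_def
proof (intro conjI ballI)
  have Ac: "A \<subseteq> carrier M" and Bc: "B \<subseteq> carrier M" using A B sub_carrier by auto
  show "{a \<oplus>\<^bsub>M\<^esub> b | a b. a \<in> A \<and> b \<in> B} \<subseteq> carrier M" using Ac Bc by auto
  have "\<zero>\<^bsub>M\<^esub> = \<zero>\<^bsub>M\<^esub> \<oplus>\<^bsub>M\<^esub> \<zero>\<^bsub>M\<^esub>" by simp
  moreover have "\<zero>\<^bsub>M\<^esub> \<in> A" "\<zero>\<^bsub>M\<^esub> \<in> B" using A B unfolding lsubmodule_def by blast+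
  ultimately show "\<zero>\<^bsub>M\<^esub> \<in> {a \<oplus>\<^bsub>M\<^esub> b | a b. a \<in> A \<and> b \<in> B}" by blast
  fix x assume "x \<in> {a \<oplus>\<^bsub>M\<^esub> b | a b. a \<in> A \<and> b \<in> B}"
  then obtain a b where ab: "a \<in> A" "b \<in> B" "x = a \<oplus>\<^bsub>M\<^esub> b" by blast
  have ac: "a \<in> carrier M" and bc: "b \<in> carrier M" using ab Ac Bc by auto
  have "\<ominus>\<^bsub>M\<^esub> x = (\<ominus>\<^bsub>M\<^esub> a) \<oplus>\<^bsub>M\<^esub> (\<ominus>\<^bsub>M\<^esub> b)" using ab ac bc by (simp add: M.minus_add)
  moreover have "\<ominus>\<^bsub>M\<^esub> a \<in> A" "\<ominus>\<^bsub>M\<^esub> b \<in> B" using A B ab unfolding lsubmodule_def by blast+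
  ultimately show "\<ominus>\<^bsub>M\<^esub> x \<in> {a \<oplus>\<^bsub>M\<^esub> b | a b. a \<in> A \<and> b \<in> B}" by blast
  { fix r assume r: "r \<in> carrier R"
    have "r \<odot>\<^bsub>M\<^esub> x = (r \<odot>\<^bsub>M\<^esub> a) \<oplus>\<^bsub>M\<^esub> (r \<odot>\<^bsub>M\<^esub> b)" using ab ac bc r by (simp add: sd2)
    moreover have "r \<odot>\<^bsub>M\<^esub> a \<in> A" "r \<odot>\<^bsub>M\<^esub> b \<in> B" using A B ab r unfolding lsubmodule_def by blast+
    ultimately show "r \<odot>\<^bsub>M\<^esub> x \<in> {a \<oplus>\<^bsub>M\<^esub> b | a b. a \<in> A \<and> b \<in> B}" by blast }
  { fix y assume "y \<in> {a \<oplus>\<^bsub>M\<^esub> b | a b. a \<in> A \<and> b \<in> B}"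
    then obtain a' b' where ab': "a' \<in> A" "b' \<in> B" "y = a' \<oplus>\<^bsub>M\<^esub> b'" by blast
    have ac': "a' \<in> carrier M" and bc': "b' \<in> carrier M" using ab' Ac Bc by auto
    have "x \<oplus>\<^bsub>M\<^esub> y = (a \<oplus>\<^bsub>M\<^esub> a') \<oplus>\<^bsub>M\<^esub> (b \<oplus>\<^bsub>M\<^esub> b')" using ab ab' ac bc ac' bc' by (simp add: M.a_ac)
    moreover have "a \<oplus>\<^bsub>M\<^esub> a' \<in> A" "b \<oplus>\<^bsub>M\<^esub> b' \<in> B" using A B ab ab' unfolding lsubmodule_def by blast+
    ultimately show "x \<oplus>\<^bsub>M\<^esub> y \<in> {a \<oplus>\<^bsub>M\<^esub> b | a b. a \<in> A \<and> b \<in> B}" by blast }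
qed

lemma cyc_sub:
  assumes v: "v \<in> carrier M"
  shows "lsubmodule R {a \<odot>\<^bsub>M\<^esub> v | a. a \<in> carrier R} M"
  unfolding lsubmodule_def
proof (intro conjI ballI)
  show "{a \<odot>\<^bsub>M\<^esub> v | a. a \<in> carrier R} \<subseteq> carrier M" using v by auto
  have "\<zero>\<^bsub>M\<^esub> = \<zero> \<odot>\<^bsub>M\<^esub> v" using v by simp
  then show "\<zero>\<^bsub>M\<^esub> \<in> {a \<odot>\<^bsub>M\<^esub> v | a. a \<in> carrier R}" by blast
  fix y assume "y \<in> {a \<odot>\<^bsub>M\<^esub> v | a. a \<in> carrier R}"
  then obtain a where a: "a \<in> carrier R" "y = a \<odot>\<^bsub>M\<^esub> v" by blast
  have "\<ominus>\<^bsub>M\<^esub> y = (\<ominus> a) \<odot>\<^bsub>M\<^esub> v" using a v by (simp add: sneg)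
  then show "\<ominus>\<^bsub>M\<^esub> y \<in> {a \<odot>\<^bsub>M\<^esub> v | a. a \<in> carrier R}" using a by blast
  { fix b assume b: "b \<in> carrier R"
    have "b \<odot>\<^bsub>M\<^esub> y = (b \<otimes> a) \<odot>\<^bsub>M\<^esub> v" using a b v by (simp add: sassoc)
    then show "b \<odot>\<^bsub>M\<^esub> y \<in> {a \<odot>\<^bsub>M\<^esub> v | a. a \<in> carrier R}" using a b by blast }
  { fix z assume "z \<in> {a \<odot>\<^bsub>M\<^esub> v | a. a \<in> carrier R}"
    then obtain b where b: "b \<in> carrier R" "z = b \<odot>\<^bsub>M\<^esub> v" by blast
    have "y \<oplus>\<^bsub>M\<^esub> z = (a \<oplus> b) \<odot>\<^bsub>M\<^esub> v" using a b v by (simp add: sd1)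
    then show "y \<oplus>\<^bsub>M\<^esub> z \<in> {a \<odot>\<^bsub>M\<^esub> v | a. a \<in> carrier R}" using a b by blast }
qed

lemma ann_li:
  assumes P: "lsubmodule R P M" and x: "x \<in> carrier M"
  shows "left_ideal R {r \<in> carrier R. r \<odot>\<^bsub>M\<^esub> x \<in> P}"
  unfolding left_ideal_def
proof (intro conjI ballI)
  show "{r \<in> carrier R. r \<odot>\<^bsub>M\<^esub> x \<in> P} \<subseteq> carrier R" by blast
  show "\<zero> \<in> {r \<in> carrier R. r \<odot>\<^bsub>M\<^esub> x \<in> P}" using P x unfolding lsubmodule_def by simp
  fix a assume a: "a \<in> {r \<in> carrier R. r \<odot>\<^bsub>M\<^esub> x \<in> P}"
  then show "\<ominus> a \<in> {r \<in> carrier R. r \<odot>\<^bsub>M\<^esub> x \<in> P}" using P x unfolding lsubmodule_def by (simp add: sneg)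
  { fix b assume b: "b \<in> carrier R"
    then show "b \<otimes> a \<in> {r \<in> carrier R. r \<odot>\<^bsub>M\<^esub> x \<in> P}" using a P x unfolding lsubmodule_def by (simp add: sassoc) }
  { fix b assume b: "b \<in> {r \<in> carrier R. r \<odot>\<^bsub>M\<^esub> x \<in> P}"
    then show "a \<oplus> b \<in> {r \<in> carrier R. r \<odot>\<^bsub>M\<^esub> x \<in> P}" using a P x unfolding lsubmodule_def by (simp add: sd1) }
qed


lemma part2:
  assumes rd: "rd_regular R M" and sl: "semilocal R"
  shows "semisimple_module R M"
  unfolding semisimple_module_def
proof (intro allI impI)
  fix N assume N: "lsubmodule R N M"
  have N0: "\<zero>\<^bsub>M\<^esub> \<in> N" using N unfolding lsubmodule_def by blast
  let ?A = "{N'. lsubmodule R N' M \<and> N \<inter> N' = {\<zero>\<^bsub>M\<^esub>}}"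
  have "\<exists>X\<in>?A. \<forall>Y\<in>?A. X \<subseteq> Y \<longrightarrow> Y = X"
  proof (rule subset_Zorn_nonempty)
    have "lsubmodule R {\<zero>\<^bsub>M\<^esub>} M" unfolding lsubmodule_def by simp
    then have "{\<zero>\<^bsub>M\<^esub>} \<in> ?A" using N0 by blast
    then show "?A \<noteq> {}" by blast
  next
    fix C assume C: "C \<noteq> {}" "subset.chain ?A C"
    have CA: "C \<subseteq> ?A" and ch: "\<And>X Y. X \<in> C \<Longrightarrow> Y \<in> C \<Longrightarrow> X \<subseteq> Y \<or> Y \<subseteq> X"
      using C(2) unfolding subset.chain_def by auto
    have sub: "lsubmodule R (\<Union>C) M"
      unfolding lsubmodule_def
    proof (intro conjI ballI)
      show "\<Union>C \<subseteq> carrier M" using CA unfolding lsubmodule_def by blast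
      show "\<zero>\<^bsub>M\<^esub> \<in> \<Union>C" using CA C(1) unfolding lsubmodule_def by blast
      fix x assume "x \<in> \<Union>C"
      then obtain X where X: "X \<in> C" "x \<in> X" by blast
      then have LX: "lsubmodule R X M" using CA by blast
      show "\<ominus>\<^bsub>M\<^esub> x \<in> \<Union>C" using X LX unfolding lsubmodule_def by blast
      { fix a assume "a \<in> carrier R"
        then show "a \<odot>\<^bsub>M\<^esub> x \<in> \<Union>C" using X LX unfolding lsubmodule_def by blast }
      { fix y assume "y \<in> \<Union>C"
        then obtain Y where Y: "Y \<in> C" "y \<in> Y" by blast
        then have LY: "lsubmodule R Y M" using CA by blast
        show "x \<oplus>\<^bsub>M\<^esub> y \<in> \<Union>C"
        proof (cases "X \<subseteq> Y")
          case True then show ?thesis using X Y LY unfolding lsubmodule_def by blast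
        next
          case False then have "Y \<subseteq> X" using ch X Y by blast
          then show ?thesis using X Y LX unfolding lsubmodule_def by blast
        qed }
    qed
    have "N \<inter> \<Union>C = {\<zero>\<^bsub>M\<^esub>}"
    proof
      show "N \<inter> \<Union>C \<subseteq> {\<zero>\<^bsub>M\<^esub>}" using CA by blast
      show "{\<zero>\<^bsub>M\<^esub>} \<subseteq> N \<inter> \<Union>C" using N0 sub unfolding lsubmodule_def by blast
    qed
    then show "\<Union>C \<in> ?A" using sub by blast
  qed
  then obtain N' where N'A: "N' \<in> ?A" and mx: "\<forall>Y\<in>?A. N' \<subseteq> Y \<longrightarrow> Y = N'" by blast
  have N': "lsubmodule R N' M" and NN': "N \<inter> N' = {\<zero>\<^bsub>M\<^esub>}" using N'A by auto
  have Nc: "N \<subseteq> carrier M" and N'c: "N' \<subseteq> carrier M" using N N' sub_carrier by auto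
  define P where "P = {a \<oplus>\<^bsub>M\<^esub> b | a b. a \<in> N \<and> b \<in> N'}"
  have P: "lsubmodule R P M" unfolding P_def using sum_sub N N' by blast
  have "P = carrier M"
  proof
    show "P \<subseteq> carrier M" using P sub_carrier by blast
    show "carrier M \<subseteq> P"
    proof
      fix x assume x: "x \<in> carrier M"
      show "x \<in> P"
      proof (rule ccontr)
        assume xP: "x \<notin> P"
        define L where "L = {r \<in> carrier R. r \<odot>\<^bsub>M\<^esub> x \<in> P}"
        have L: "left_ideal R L" unfolding L_def using ann_li P x by blast
        obtain l l2 where l: "l \<in> L" and l2: "l2 \<in> carrier R"
            and jj: "\<one> \<ominus> (l \<oplus> l2) \<in> jacobson_radical R"
            and key: "\<forall>r\<in>carrier R. r \<otimes> l2 \<in> L \<longrightarrow> r \<otimes> l2 \<in> jacobson_radical R"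
          using R.semilocal_split[OF sl L] by blast
        have lc: "l \<in> carrier R" using l unfolding L_def by blast
        define y where "y = l2 \<odot>\<^bsub>M\<^esub> x"
        have yc: "y \<in> carrier M" using l2 x unfolding y_def by simp
        have lx: "l \<odot>\<^bsub>M\<^esub> x \<in> P" using l unfolding L_def by blast
        have lxc: "l \<odot>\<^bsub>M\<^esub> x \<in> carrier M" using lc x by simp
        define jj0 where "jj0 = \<one> \<ominus> (l \<oplus> l2)"
        have jj0c: "jj0 \<in> carrier R" using lc l2 unfolding jj0_def by simp
        have one: "\<one> = jj0 \<oplus> (l \<oplus> l2)" using lc l2 unfolding jj0_def
          by (simp add: a_minus_def R.a_assoc R.l_neg)
        have "x = \<one> \<odot>\<^bsub>M\<^esub> x" using x by simp
        also have "\<dots> = (jj0 \<odot>\<^bsub>M\<^esub> x) \<oplus>\<^bsub>M\<^esub> ((l \<odot>\<^bsub>M\<^esub> x) \<oplus>\<^bsub>M\<^esub> y)"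
          unfolding y_def by (subst one) (simp add: sd1 jj0c lc l2 x)
        also have "jj0 \<odot>\<^bsub>M\<^esub> x = \<zero>\<^bsub>M\<^esub>" using part1[OF rd jj x] unfolding jj0_def .
        finally have xeq: "x = (l \<odot>\<^bsub>M\<^esub> x) \<oplus>\<^bsub>M\<^esub> y" using lxc yc by simp
        have yP: "y \<notin> P"
        proof
          assume "y \<in> P"
          then have "(l \<odot>\<^bsub>M\<^esub> x) \<oplus>\<^bsub>M\<^esub> y \<in> P" using lx P unfolding lsubmodule_def by blast
          then show False using xP xeq by simp
        qed
        define Y where "Y = {a \<odot>\<^bsub>M\<^esub> y | a. a \<in> carrier R}"
        define N'' where "N'' = {a \<oplus>\<^bsub>M\<^esub> b | a b. a \<in> N' \<and> b \<in> Y}"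
        have Y: "lsubmodule R Y M" unfolding Y_def using cyc_sub yc by blast
        have N'': "lsubmodule R N'' M" unfolding N''_def using sum_sub N' Y by blast
        have "N \<inter> N'' = {\<zero>\<^bsub>M\<^esub>}"
        proof
          show "{\<zero>\<^bsub>M\<^esub>} \<subseteq> N \<inter> N''" using N0 N'' unfolding lsubmodule_def by blast
          show "N \<inter> N'' \<subseteq> {\<zero>\<^bsub>M\<^esub>}"
          proof
            fix n assume "n \<in> N \<inter> N''"
            then have n: "n \<in> N" and "n \<in> N''" by auto
            then obtain a b where ab: "a \<in> N'" "b \<in> Y" "n = a \<oplus>\<^bsub>M\<^esub> b" unfolding N''_def by blast
            obtain r where r: "r \<in> carrier R" "b = r \<odot>\<^bsub>M\<^esub> y" using ab unfolding Y_def by blast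
            have ac: "a \<in> carrier M" using ab N'c by blast
            have nc: "n \<in> carrier M" using n Nc by blast
            have bc: "b \<in> carrier M" using r yc by simp
            have "n \<oplus>\<^bsub>M\<^esub> (\<ominus>\<^bsub>M\<^esub> a) = (b \<oplus>\<^bsub>M\<^esub> a) \<oplus>\<^bsub>M\<^esub> (\<ominus>\<^bsub>M\<^esub> a)"
              using ab ac bc by (simp add: M.a_comm)
            also have "\<dots> = b \<oplus>\<^bsub>M\<^esub> (a \<oplus>\<^bsub>M\<^esub> (\<ominus>\<^bsub>M\<^esub> a))"
              using ac bc by (simp add: M.a_assoc)
            also have "\<dots> = b" using ac bc by (simp add: M.r_neg)
            finally have "b = n \<oplus>\<^bsub>M\<^esub> (\<ominus>\<^bsub>M\<^esub> a)" by simp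
            moreover have "\<ominus>\<^bsub>M\<^esub> a \<in> N'" using N' ab unfolding lsubmodule_def by blast
            ultimately have "b \<in> P" unfolding P_def using n by blast
            moreover have "b = (r \<otimes> l2) \<odot>\<^bsub>M\<^esub> x" using r l2 x unfolding y_def by (simp add: sassoc)
            ultimately have "r \<otimes> l2 \<in> L" unfolding L_def using r l2 by simp
            then have "r \<otimes> l2 \<in> jacobson_radical R" using key r by blast
            then have "b = \<zero>\<^bsub>M\<^esub>" using part1[OF rd _ x] \<open>b = (r \<otimes> l2) \<odot>\<^bsub>M\<^esub> x\<close> by simp
            then have "n = a" using ab ac by simp
            then have "n \<in> N \<inter> N'" using n ab by simp
            then show "n \<in> {\<zero>\<^bsub>M\<^esub>}" using NN' by simp
          qed
        qed
        moreover have "N' \<subseteq> N''"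
        proof
          fix a assume a: "a \<in> N'"
          have "a = a \<oplus>\<^bsub>M\<^esub> (\<zero> \<odot>\<^bsub>M\<^esub> y)" using a N'c yc by auto
          moreover have "\<zero> \<odot>\<^bsub>M\<^esub> y \<in> Y" unfolding Y_def by blast
          ultimately show "a \<in> N''" unfolding N''_def using a by blast
        qed
        ultimately have "N'' = N'" using mx N'' by blast
        moreover have "y \<in> N''"
        proof -
          have "y = \<zero>\<^bsub>M\<^esub> \<oplus>\<^bsub>M\<^esub> (\<one> \<odot>\<^bsub>M\<^esub> y)" using yc by simp
          moreover have "\<one> \<odot>\<^bsub>M\<^esub> y \<in> Y" unfolding Y_def by blast
          moreover have "\<zero>\<^bsub>M\<^esub> \<in> N'" using N' unfolding lsubmodule_def by blast
          ultimately show ?thesis unfolding N''_def by blast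
        qed
        ultimately have "y \<in> N'" by simp
        moreover have "y = \<zero>\<^bsub>M\<^esub> \<oplus>\<^bsub>M\<^esub> y" using yc by simp
        ultimately have "y \<in> P" unfolding P_def using N0 by blast
        then show False using yP by blast
      qed
    qed
  qed
  then show "\<exists>N'. lsubmodule R N' M \<and> N \<inter> N' = {\<zero>\<^bsub>M\<^esub>} \<and>
        {x \<oplus>\<^bsub>M\<^esub> y | x y. x \<in> N \<and> y \<in> N'} = carrier M"
    using N' NN' unfolding P_def by blast
qed

end

theorem proposition2p1:
  fixes R :: "('a, 'c) ring_scheme" and M :: "('a, 'b, 'd) module_scheme"
  assumes "ring R" and "left_module R M" and "rd_regular R M"
  shows "(\<forall>j\<in>jacobson_radical R. \<forall>x\<in>carrier M. j \<odot>\<^bsub>M\<^esub> x = \<zero>\<^bsub>M\<^esub>)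
         \<and> (semilocal R \<longrightarrow> semisimple_module R M)"
proof -
  interpret lmod R M by unfold_locales (rule assms(2))
  show ?thesis using part1[OF assms(3)] part2[OF assms(3)] by blast
qed

end
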